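(* Let $\underline{V}=(v_1,\dots,v_n)$ be a random signal whose entries are independent, each $v_i$ being equal to $0$ with probability $1-\alpha$ and drawn from a distribution $f$ with probability $\alpha$. Let $\mathcal{K}=\{v_i : v_i\neq 0\}$ be the support set. Consider a bipartite graph with variable nodes $v_1,\dots,v_n$ and check nodes, in which each edge between $v_i$ and check node $c_j$ carries a weight $w_{ij}$, the weights being drawn i.i.d. from a distribution $g$ independently of the signal. The value of check node $c_j$ is $c_j=\sum_{i:\, v_i\in\mathcal{M}(c_j)} w_{ij}v_i$, where $\mathcal{M}(c)$ denotes the set of variable nodes adjacent to $c$. Suppose at least one of $f$ or $g$ is a continuous distribution. Let $c_i$ and $c_j$ be two distinct check nodes and let $\mathcal{V}_i=\mathcal{M}(c_i)\cap\mathcal{K}$ and $\mathcal{V}_j=\mathcal{M}(c_j)\cap\mathcal{K}$. Then: if $c_i=0$, then $\mathcal{V}_i=\emptyset$ with probability one; and if $\mathcal{V}_i\neq\mathcal{V}_j$, then $\Pr(c_i=c_j)=0$.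
   Context: This is the compressed sensing measurement model $\underline{C}=\underline{V}\mathbf{G}$, where the sensing matrix $\mathbf{G}$ is the weighted incidence matrix of the bipartite graph (entry in row $i$, column $j$ equals $w_{ij}$ if $v_i$ and $c_j$ are adjacent and $0$ otherwise). Variable nodes correspond to signal entries and check nodes to measurements. *)

theory Defs
  imports "HOL-Probability.Probability"
begin

text \<open>Variable nodes are indexed by i < n, check nodes by j < m.
  adj i j means variable node v_i is adjacent to check node c_j.\<close>

definition nbrs :: "nat \<Rightarrow> (nat \<Rightarrow> nat \<Rightarrow> bool) \<Rightarrow> nat \<Rightarrow> nat set" where
  "nbrs n adj j = {i. i < n \<and> adj i j}"

definition check_val ::
  "nat \<Rightarrow> (nat \<Rightarrow> nat \<Rightarrow> bool) \<Rightarrow> (nat \<Rightarrow> nat \<Rightarrow> 'a \<Rightarrow> real) \<Rightarrow> (nat \<Rightarrow> 'a \<Rightarrow> real)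
     \<Rightarrow> nat \<Rightarrow> 'a \<Rightarrow> real" where
  "check_val n adj w v j \<omega> = (\<Sum>i\<in>nbrs n adj j. w i j \<omega> * v i \<omega>)"

definition support_set :: "nat \<Rightarrow> (nat \<Rightarrow> 'a \<Rightarrow> real) \<Rightarrow> 'a \<Rightarrow> nat set" where
  "support_set n v \<omega> = {i. i < n \<and> v i \<omega> \<noteq> 0}"

definition continuous_distr :: "real measure \<Rightarrow> bool" where
  "continuous_distr \<mu> \<longleftrightarrow> (\<forall>x. measure \<mu> {x} = 0)"

definition sig_weights :: "(nat \<Rightarrow> 'a \<Rightarrow> real) \<Rightarrow> (nat \<Rightarrow> nat \<Rightarrow> 'a \<Rightarrow> real)
     \<Rightarrow> nat + nat \<times> nat \<Rightarrow> 'a \<Rightarrow> real" where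
  "sig_weights v w k = (case k of Inl i \<Rightarrow> v i | Inr (i, j) \<Rightarrow> w i j)"

end

theory Submission
  imports Defs
begin

lemma lemL:
  fixes X Y :: "'a \<Rightarrow> 'b" and h \<phi> :: "'b \<Rightarrow> real"
  assumes M: "prob_space M" and ind: "prob_space.indep_var M N Y P X"
    and h: "h \<in> borel_measurable N" and phi: "\<phi> \<in> borel_measurable P"
    and at: "\<And>x. x \<noteq> 0 \<Longrightarrow> emeasure M {\<omega>\<in>space M. \<phi> (X \<omega>) = x} = 0"
  shows "{\<omega>\<in>space M. \<phi> (X \<omega>) = h (Y \<omega>) \<and> \<phi> (X \<omega>) \<noteq> 0} \<in> null_sets M"
proof -
  interpret prob_space M by (rule M)
  have rvY: "random_variable N Y" and rvX: "random_variable P X"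
    using ind by (blast dest: indep_var_rv1 indep_var_rv2)+
  have eq: "distr M N Y \<Otimes>\<^sub>M distr M P X = distr M (N \<Otimes>\<^sub>M P) (\<lambda>x. (Y x, X x))"
    using ind indep_var_distribution_eq by blast
  interpret PX: prob_space "distr M P X" by (rule prob_space_distr[OF rvX])
  define S where "S = {p \<in> space (N \<Otimes>\<^sub>M P). \<phi> (snd p) = h (fst p) \<and> \<phi> (snd p) \<noteq> 0}"
  have S: "S \<in> sets (N \<Otimes>\<^sub>M P)" unfolding S_def using h phi by measurable
  have S': "S \<in> sets (distr M N Y \<Otimes>\<^sub>M distr M P X)" using S by simp
  have ev: "{\<omega>\<in>space M. \<phi> (X \<omega>) = h (Y \<omega>) \<and> \<phi> (X \<omega>) \<noteq> 0} = (\<lambda>x. (Y x, X x)) -` S \<inter> space M"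
    using rvY rvX unfolding S_def by (auto simp: space_pair_measure measurable_def)
  have mXY: "(\<lambda>x. (Y x, X x)) \<in> measurable M (N \<Otimes>\<^sub>M P)" using rvY rvX by measurable
  have "emeasure M ((\<lambda>x. (Y x, X x)) -` S \<inter> space M) = emeasure (distr M (N \<Otimes>\<^sub>M P) (\<lambda>x. (Y x, X x))) S"
    using S mXY by (simp add: emeasure_distr)
  also have "\<dots> = emeasure (distr M N Y \<Otimes>\<^sub>M distr M P X) S" by (simp add: eq)
  also have "\<dots> = (\<integral>\<^sup>+y. emeasure (distr M P X) (Pair y -` S) \<partial>distr M N Y)"
    by (rule PX.emeasure_pair_measure_alt[OF S'])
  also have "\<dots> = (\<integral>\<^sup>+y. 0 \<partial>distr M N Y)"
  proof (rule nn_integral_cong)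
    fix y assume "y \<in> space (distr M N Y)"
    then have y: "y \<in> space N" by simp
    show "emeasure (distr M P X) (Pair y -` S) = 0"
    proof (cases "h y = 0")
      case True
      then have "Pair y -` S = {}" unfolding S_def by auto
      then show ?thesis by simp
    next
      case False
      then have e1: "Pair y -` S = \<phi> -` {h y} \<inter> space P" unfolding S_def using y by (auto simp: space_pair_measure)
      have e2: "X -` (\<phi> -` {h y} \<inter> space P) \<inter> space M = {\<omega>\<in>space M. \<phi> (X \<omega>) = h y}"
        using rvX by (auto simp: measurable_def)
      have "\<phi> -` {h y} \<inter> space P \<in> sets P" using phi by measurable
      then show ?thesis unfolding e1 using rvX at[OF False] e2 by (simp add: emeasure_distr)
    qed
  qed
  also have "\<dots> = 0" by simp
  finally show ?thesis unfolding ev using mXY S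
    by (auto simp: null_sets_def intro!: measurable_sets)
qed


lemma core:
  fixes X :: "'i \<Rightarrow> 'a \<Rightarrow> real"
  assumes M: "prob_space M" and ind: "prob_space.indep_vars M (\<lambda>_. borel) X I"
    and k: "k0 \<in> I" "k1 \<in> I" "k0 \<noteq> k1" and J0: "J0 \<subseteq> I - {k0, k1}"
    and r: "r \<in> borel_measurable (PiM J0 (\<lambda>_. borel))"
    and at: "\<And>x. x \<noteq> 0 \<Longrightarrow> emeasure M {\<omega>\<in>space M. X k0 \<omega> = x} = 0"
  shows "{\<omega>\<in>space M. X k0 \<omega> * X k1 \<omega> + r (restrict (\<lambda>k. X k \<omega>) J0) = 0 \<and> X k0 \<omega> \<noteq> 0 \<and> X k1 \<omega> \<noteq> 0} \<in> null_sets M"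
proof -
  interpret prob_space M by (rule M)
  define B where "B = I - {k0}"
  have iv: "indep_var (PiM B (\<lambda>_. borel)) (\<lambda>\<omega>. restrict (\<lambda>i. X i \<omega>) B) (PiM {k0} (\<lambda>_. borel)) (\<lambda>\<omega>. restrict (\<lambda>i. X i \<omega>) {k0})"
    by (rule indep_var_restrict[OF ind]) (use k in \<open>auto simp: B_def\<close>)
  have J0B: "J0 \<subseteq> B" using J0 by (auto simp: B_def)
  have k1B: "k1 \<in> B" using k by (auto simp: B_def)
  define h where "h = (\<lambda>y::'i \<Rightarrow> real. - r (restrict y J0) / y k1)"
  have hm: "h \<in> borel_measurable (PiM B (\<lambda>_. borel))"
    unfolding h_def
    by (intro borel_measurable_divide borel_measurable_uminus measurable_compose[OF measurable_restrict_subset[OF J0B] r]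
        measurable_component_singleton k1B)
  have phi: "(\<lambda>f. f k0) \<in> borel_measurable (PiM {k0} (\<lambda>_. borel))"
    by (rule measurable_component_singleton) simp
  have N0: "{\<omega>\<in>space M. restrict (\<lambda>i. X i \<omega>) {k0} k0 = h (restrict (\<lambda>i. X i \<omega>) B) \<and> restrict (\<lambda>i. X i \<omega>) {k0} k0 \<noteq> 0} \<in> null_sets M"
    by (rule lemL[OF M iv hm phi]) (use at in simp)
  have Xm: "\<And>k. k \<in> I \<Longrightarrow> X k \<in> borel_measurable M"
    using ind unfolding indep_vars_def by auto
  have Rm: "(\<lambda>\<omega>. restrict (\<lambda>k. X k \<omega>) J0) \<in> measurable M (PiM J0 (\<lambda>_. borel))"
    by (rule measurable_restrict) (use Xm J0 in auto)
  have Em: "{\<omega>\<in>space M. X k0 \<omega> * X k1 \<omega> + r (restrict (\<lambda>k. X k \<omega>) J0) = 0 \<and> X k0 \<omega> \<noteq> 0 \<and> X k1 \<omega> \<noteq> 0} \<in> sets M"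
    using Xm[OF k(1)] Xm[OF k(2)] measurable_compose[OF Rm r] by measurable
  show ?thesis
  proof (rule null_sets_subset[OF N0 Em], safe)
    fix \<omega> assume "\<omega> \<in> space M" "X k0 \<omega> * X k1 \<omega> + r (restrict (\<lambda>k. X k \<omega>) J0) = 0"
      "X k0 \<omega> \<noteq> 0" "X k1 \<omega> \<noteq> 0"
    moreover have "restrict (restrict (\<lambda>i. X i \<omega>) B) J0 = restrict (\<lambda>k. X k \<omega>) J0"
      using J0B by (auto simp: restrict_def fun_eq_iff)
    ultimately show "restrict (\<lambda>i. X i \<omega>) {k0} k0 = h (restrict (\<lambda>i. X i \<omega>) B)"
      using k1B by (simp add: h_def field_simps)
  qed auto
qed


theorem theorem1:
  fixes M :: "'a measure"
    and n m :: nat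
    and adj :: "nat \<Rightarrow> nat \<Rightarrow> bool"
    and v :: "nat \<Rightarrow> 'a \<Rightarrow> real"
    and w :: "nat \<Rightarrow> nat \<Rightarrow> 'a \<Rightarrow> real"
    and \<alpha> :: real
    and f g :: "real measure"
    and a b :: nat
  assumes M: "prob_space M"
    and alpha: "0 \<le> \<alpha>" "\<alpha> \<le> 1"
    and f: "prob_space f" "sets f = sets borel"
    and g: "prob_space g" "sets g = sets borel"
    and g_nonzero: "measure g {0} = 0"
    and v_meas: "\<And>i. i < n \<Longrightarrow> v i \<in> borel_measurable M"
    and w_meas: "\<And>i j. i < n \<Longrightarrow> j < m \<Longrightarrow> adj i j \<Longrightarrow> w i j \<in> borel_measurable M"
    and v_distr: "\<And>i A. i < n \<Longrightarrow> A \<in> sets borel \<Longrightarrow>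
        measure M (v i -` A \<inter> space M) = (1 - \<alpha>) * indicator A 0 + \<alpha> * measure f A"
    and w_distr: "\<And>i j. i < n \<Longrightarrow> j < m \<Longrightarrow> adj i j \<Longrightarrow> distr M borel (w i j) = g"
    and indep: "prob_space.indep_vars M (\<lambda>_. borel) (sig_weights v w)
        ({Inl i | i. i < n} \<union> {Inr (i, j) | i j. i < n \<and> j < m \<and> adj i j})"
    and cont: "continuous_distr f \<or> continuous_distr g"
    and ab: "a < m" "b < m" "a \<noteq> b"
  shows "(AE \<omega> in M. check_val n adj w v a \<omega> = 0 \<longrightarrow>
            nbrs n adj a \<inter> support_set n v \<omega> = {})
       \<and> measure M {\<omega> \<in> space M. check_val n adj w v a \<omega> = check_val n adj w v b \<omega> \<and>
            nbrs n adj a \<inter> support_set n v \<omega> \<noteq> nbrs n adj b \<inter> support_set n v \<omega>} = 0"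
proof -
  interpret prob_space M by (rule M)
  define I where "I = {Inl i | i. i < n} \<union> {Inr (i, j) | i j. i < n \<and> j < m \<and> adj i j}"
  define X where "X = sig_weights v w"
  have ind: "indep_vars (\<lambda>_. borel) X I" using indep by (simp add: I_def X_def)
  have Xl[simp]: "X (Inl i) = v i" for i by (simp add: X_def sig_weights_def)
  have Xr[simp]: "X (Inr (i, j)) = w i j" for i j by (simp add: X_def sig_weights_def)
  have fin: "finite (nbrs n adj c)" for c by (rule finite_subset[of _ "{..<n}"]) (auto simp: nbrs_def)
  have Z: "{\<omega>\<in>space M. w i c \<omega> = 0} \<in> null_sets M" if "i \<in> nbrs n adj c" "c < m" for i c
  proof -
    have i: "i < n" "adj i c" using that by (auto simp: nbrs_def)
    have wm: "w i c \<in> borel_measurable M" using w_meas i that by auto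
    have "emeasure M {\<omega>\<in>space M. w i c \<omega> = 0} = emeasure (distr M borel (w i c)) {0}"
      using wm by (simp add: emeasure_distr vimage_def Int_def conj_commute)
    also have "\<dots> = emeasure g {0}" using w_distr i that by simp
    also have "\<dots> = 0" using g g_nonzero by (simp add: finite_measure.emeasure_eq_measure prob_space_def)
    finally show ?thesis using wm by (auto simp: null_sets_def)
  qed
  have app: "{\<omega>\<in>space M. w i c \<omega> * v i \<omega> + r (restrict (\<lambda>k. X k \<omega>) J0) = 0 \<and> v i \<omega> \<noteq> 0 \<and> w i c \<omega> \<noteq> 0} \<in> null_sets M"
    if ic: "i < n" "c < m" "adj i c" and J0: "J0 \<subseteq> I - {Inl i, Inr (i, c)}"
      and r: "r \<in> borel_measurable (PiM J0 (\<lambda>_. borel))" for i c J0 r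
  proof -
    have k: "Inl i \<in> I" "Inr (i, c) \<in> I" using ic by (auto simp: I_def)
    show ?thesis
    proof (cases "continuous_distr f")
      case True
      have at: "emeasure M {\<omega>\<in>space M. X (Inl i) \<omega> = x} = 0" if "x \<noteq> 0" for x
      proof -
        have "measure M (v i -` {x} \<inter> space M) = 0"
          using v_distr[OF ic(1), of "{x}"] True that by (simp add: continuous_distr_def)
        moreover have "v i -` {x} \<inter> space M = {\<omega>\<in>space M. X (Inl i) \<omega> = x}" by auto
        ultimately show ?thesis by (simp add: emeasure_eq_measure)
      qed
      have "{\<omega>\<in>space M. X (Inl i) \<omega> * X (Inr (i, c)) \<omega> + r (restrict (\<lambda>k. X k \<omega>) J0) = 0 \<and> X (Inl i) \<omega> \<noteq> 0 \<and> X (Inr (i, c)) \<omega> \<noteq> 0} \<in> null_sets M"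
        by (rule core[OF M ind k(1) k(2) _ J0 r at]) auto
      then show ?thesis by (simp add: mult.commute conj_commute)
    next
      case False
      then have gc: "continuous_distr g" using cont by auto
      have at: "emeasure M {\<omega>\<in>space M. X (Inr (i, c)) \<omega> = x} = 0" for x
      proof -
        have wm: "w i c \<in> borel_measurable M" using w_meas ic by auto
        have "emeasure M {\<omega>\<in>space M. w i c \<omega> = x} = emeasure (distr M borel (w i c)) {x}"
          using wm by (simp add: emeasure_distr vimage_def Int_def conj_commute)
        also have "\<dots> = emeasure g {x}" using w_distr ic by simp
        also have "\<dots> = 0" using g gc by (simp add: finite_measure.emeasure_eq_measure prob_space_def continuous_distr_def)
        finally show ?thesis by simp
      qed
      have "{\<omega>\<in>space M. X (Inr (i, c)) \<omega> * X (Inl i) \<omega> + r (restrict (\<lambda>k. X k \<omega>) J0) = 0 \<and> X (Inr (i, c)) \<omega> \<noteq> 0 \<and> X (Inl i) \<omega> \<noteq> 0} \<in> null_sets M"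
        by (rule core[OF M ind k(2) k(1) _ _ r at]) (use J0 in auto)
      then show ?thesis by (simp add: conj_commute)
    qed
  qed
  have G: "{\<omega>\<in>space M. check_val n adj w v c \<omega> - (\<Sum>k\<in>Sb. w k d \<omega> * v k \<omega>) = 0 \<and> v i \<omega> \<noteq> 0 \<and> w i c \<omega> \<noteq> 0} \<in> null_sets M"
    if i: "i \<in> nbrs n adj c" and Sb: "Sb \<subseteq> nbrs n adj d" "i \<notin> Sb" and cd: "c < m" "d < m" "c \<noteq> d" for i c d Sb
  proof -
    have ic: "i < n" "adj i c" using i by (auto simp: nbrs_def)
    define J0 where "J0 = Inl ` ((nbrs n adj c - {i}) \<union> Sb) \<union> (\<lambda>k. Inr (k, c)) ` (nbrs n adj c - {i}) \<union> (\<lambda>k. Inr (k, d)) ` Sb"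
    define r where "r = (\<lambda>y::nat + nat \<times> nat \<Rightarrow> real. (\<Sum>k\<in>nbrs n adj c - {i}. y (Inr (k, c)) * y (Inl k)) - (\<Sum>k\<in>Sb. y (Inr (k, d)) * y (Inl k)))"
    have J0I: "J0 \<subseteq> I - {Inl i, Inr (i, c)}"
      using Sb cd unfolding J0_def I_def by (auto simp: nbrs_def)
    have rm: "r \<in> borel_measurable (PiM J0 (\<lambda>_. borel))"
      unfolding r_def J0_def
      by (intro borel_measurable_diff borel_measurable_sum borel_measurable_times measurable_component_singleton) auto
    have eq: "check_val n adj w v c \<omega> - (\<Sum>k\<in>Sb. w k d \<omega> * v k \<omega>) = w i c \<omega> * v i \<omega> + r (restrict (\<lambda>k. X k \<omega>) J0)" for \<omega>
    proof -
      have "check_val n adj w v c \<omega> = w i c \<omega> * v i \<omega> + (\<Sum>k\<in>nbrs n adj c - {i}. w k c \<omega> * v k \<omega>)"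
        unfolding check_val_def using fin i by (simp add: sum.remove)
      moreover have "(\<Sum>k\<in>nbrs n adj c - {i}. restrict (\<lambda>k. X k \<omega>) J0 (Inr (k, c)) * restrict (\<lambda>k. X k \<omega>) J0 (Inl k)) = (\<Sum>k\<in>nbrs n adj c - {i}. w k c \<omega> * v k \<omega>)"
        by (intro sum.cong) (auto simp: J0_def)
      moreover have "(\<Sum>k\<in>Sb. restrict (\<lambda>k. X k \<omega>) J0 (Inr (k, d)) * restrict (\<lambda>k. X k \<omega>) J0 (Inl k)) = (\<Sum>k\<in>Sb. w k d \<omega> * v k \<omega>)"
        by (intro sum.cong) (auto simp: J0_def)
      ultimately show ?thesis unfolding r_def by simp
    qed
    show ?thesis unfolding eq by (rule app[OF ic(1) cd(1) ic(2) J0I rm])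
  qed
  define N1 where "N1 = (\<Union>i\<in>nbrs n adj a. {\<omega>\<in>space M. check_val n adj w v a \<omega> - (\<Sum>k\<in>{}. w k b \<omega> * v k \<omega>) = 0 \<and> v i \<omega> \<noteq> 0 \<and> w i a \<omega> \<noteq> 0} \<union> {\<omega>\<in>space M. w i a \<omega> = 0})"
  have N1: "N1 \<in> null_sets M" unfolding N1_def
  proof (rule null_sets_UN')
    fix i assume i: "i \<in> nbrs n adj a"
    show "{\<omega>\<in>space M. check_val n adj w v a \<omega> - (\<Sum>k\<in>{}. w k b \<omega> * v k \<omega>) = 0 \<and> v i \<omega> \<noteq> 0 \<and> w i a \<omega> \<noteq> 0} \<union> {\<omega>\<in>space M. w i a \<omega> = 0} \<in> null_sets M"
      by (rule null_sets.Un[OF G[OF i _ _ ab] Z[OF i ab(1)]]) simp_all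
  qed simp
  have P1: "AE \<omega> in M. check_val n adj w v a \<omega> = 0 \<longrightarrow> nbrs n adj a \<inter> support_set n v \<omega> = {}"
  proof (rule AE_I'[OF N1], rule subsetI)
    fix \<omega> assume "\<omega> \<in> {\<omega> \<in> space M. \<not> (check_val n adj w v a \<omega> = 0 \<longrightarrow> nbrs n adj a \<inter> support_set n v \<omega> = {})}"
    then obtain i where sp: "\<omega> \<in> space M" and c0: "check_val n adj w v a \<omega> = 0"
      and i: "i \<in> nbrs n adj a" "i \<in> support_set n v \<omega>" by blast
    then have "v i \<omega> \<noteq> 0" by (simp add: support_set_def)
    then have "\<omega> \<in> {\<omega>\<in>space M. check_val n adj w v a \<omega> - (\<Sum>k\<in>{}. w k b \<omega> * v k \<omega>) = 0 \<and> v i \<omega> \<noteq> 0 \<and> w i a \<omega> \<noteq> 0} \<union> {\<omega>\<in>space M. w i a \<omega> = 0}"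
      using sp c0 by simp
    then show "\<omega> \<in> N1" using i unfolding N1_def by blast
  qed
  define N2 where "N2 = (\<Union>i\<in>nbrs n adj a - nbrs n adj b. {\<omega>\<in>space M. check_val n adj w v a \<omega> - (\<Sum>k\<in>nbrs n adj b. w k b \<omega> * v k \<omega>) = 0 \<and> v i \<omega> \<noteq> 0 \<and> w i a \<omega> \<noteq> 0} \<union> {\<omega>\<in>space M. w i a \<omega> = 0})
     \<union> (\<Union>i\<in>nbrs n adj b - nbrs n adj a. {\<omega>\<in>space M. check_val n adj w v b \<omega> - (\<Sum>k\<in>nbrs n adj a. w k a \<omega> * v k \<omega>) = 0 \<and> v i \<omega> \<noteq> 0 \<and> w i b \<omega> \<noteq> 0} \<union> {\<omega>\<in>space M. w i b \<omega> = 0})"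
  have N2: "N2 \<in> null_sets M" unfolding N2_def
  proof (rule null_sets.Un)
    show "(\<Union>i\<in>nbrs n adj a - nbrs n adj b. {\<omega>\<in>space M. check_val n adj w v a \<omega> - (\<Sum>k\<in>nbrs n adj b. w k b \<omega> * v k \<omega>) = 0 \<and> v i \<omega> \<noteq> 0 \<and> w i a \<omega> \<noteq> 0} \<union> {\<omega>\<in>space M. w i a \<omega> = 0}) \<in> null_sets M"
    proof (rule null_sets_UN')
      fix i assume i: "i \<in> nbrs n adj a - nbrs n adj b"
      then have i1: "i \<in> nbrs n adj a" and i2: "i \<notin> nbrs n adj b" by auto
      show "{\<omega>\<in>space M. check_val n adj w v a \<omega> - (\<Sum>k\<in>nbrs n adj b. w k b \<omega> * v k \<omega>) = 0 \<and> v i \<omega> \<noteq> 0 \<and> w i a \<omega> \<noteq> 0} \<union> {\<omega>\<in>space M. w i a \<omega> = 0} \<in> null_sets M"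
        by (rule null_sets.Un[OF G[OF i1 _ i2 ab] Z[OF i1 ab(1)]]) simp
    qed simp
    have ba: "b < m" "a < m" "b \<noteq> a" using ab by auto
    show "(\<Union>i\<in>nbrs n adj b - nbrs n adj a. {\<omega>\<in>space M. check_val n adj w v b \<omega> - (\<Sum>k\<in>nbrs n adj a. w k a \<omega> * v k \<omega>) = 0 \<and> v i \<omega> \<noteq> 0 \<and> w i b \<omega> \<noteq> 0} \<union> {\<omega>\<in>space M. w i b \<omega> = 0}) \<in> null_sets M"
    proof (rule null_sets_UN')
      fix i assume i: "i \<in> nbrs n adj b - nbrs n adj a"
      then have i1: "i \<in> nbrs n adj b" and i2: "i \<notin> nbrs n adj a" by auto
      show "{\<omega>\<in>space M. check_val n adj w v b \<omega> - (\<Sum>k\<in>nbrs n adj a. w k a \<omega> * v k \<omega>) = 0 \<and> v i \<omega> \<noteq> 0 \<and> w i b \<omega> \<noteq> 0} \<union> {\<omega>\<in>space M. w i b \<omega> = 0} \<in> null_sets M"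
        by (rule null_sets.Un[OF G[OF i1 _ i2 ba] Z[OF i1 ba(1)]]) simp
    qed simp
  qed
  define E where "E = {\<omega> \<in> space M. check_val n adj w v a \<omega> = check_val n adj w v b \<omega> \<and>
            nbrs n adj a \<inter> support_set n v \<omega> \<noteq> nbrs n adj b \<inter> support_set n v \<omega>}"
  have EN: "E \<subseteq> N2"
  proof
    fix \<omega> assume "\<omega> \<in> E"
    then have sp: "\<omega> \<in> space M" and eqc: "check_val n adj w v a \<omega> = check_val n adj w v b \<omega>"
      and ne: "nbrs n adj a \<inter> support_set n v \<omega> \<noteq> nbrs n adj b \<inter> support_set n v \<omega>" by (auto simp: E_def)
    from ne obtain i where "(i \<in> nbrs n adj a \<and> i \<notin> nbrs n adj b \<and> v i \<omega> \<noteq> 0) \<or> (i \<in> nbrs n adj b \<and> i \<notin> nbrs n adj a \<and> v i \<omega> \<noteq> 0)"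
      by (auto simp: support_set_def nbrs_def)
    then show "\<omega> \<in> N2"
    proof
      assume h: "i \<in> nbrs n adj a \<and> i \<notin> nbrs n adj b \<and> v i \<omega> \<noteq> 0"
      have "check_val n adj w v a \<omega> - (\<Sum>k\<in>nbrs n adj b. w k b \<omega> * v k \<omega>) = 0"
        using eqc by (simp add: check_val_def)
      then have "\<omega> \<in> {\<omega>\<in>space M. check_val n adj w v a \<omega> - (\<Sum>k\<in>nbrs n adj b. w k b \<omega> * v k \<omega>) = 0 \<and> v i \<omega> \<noteq> 0 \<and> w i a \<omega> \<noteq> 0} \<union> {\<omega>\<in>space M. w i a \<omega> = 0}"
        using sp h by blast
      then show ?thesis using h unfolding N2_def by blast
    next
      assume h: "i \<in> nbrs n adj b \<and> i \<notin> nbrs n adj a \<and> v i \<omega> \<noteq> 0"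
      have "check_val n adj w v b \<omega> - (\<Sum>k\<in>nbrs n adj a. w k a \<omega> * v k \<omega>) = 0"
        using eqc by (simp add: check_val_def)
      then have "\<omega> \<in> {\<omega>\<in>space M. check_val n adj w v b \<omega> - (\<Sum>k\<in>nbrs n adj a. w k a \<omega> * v k \<omega>) = 0 \<and> v i \<omega> \<noteq> 0 \<and> w i b \<omega> \<noteq> 0} \<union> {\<omega>\<in>space M. w i b \<omega> = 0}"
        using sp h by blast
      then show ?thesis using h unfolding N2_def by blast
    qed
  qed
  have P2: "measure M E = 0"
  proof (cases "E \<in> sets M")
    case True
    then have "E \<in> null_sets M" using null_sets_subset[OF N2 True EN] by simp
    then show ?thesis by (simp add: measure_def null_sets_def)
  next
    case False then show ?thesis by (rule measure_notin_sets)
  qed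
  show ?thesis using P1 P2 by (simp add: E_def)
qed

end
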